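(* Let $\mathcal{X}$ be an input space, let $X$ be a random input in $\mathcal{X}$ with label $Y\in\{0,1\}$, and let $S\in[0,1]$ be a random confidence score such that, conditionally on $X=x$, $S$ has density $f_{S\mid X}(s\mid x)=\sum_{k=1}^K \mathbf{1}[\gamma(x)=k]\,u_k(s)=u_{\gamma(x)}(s)$, where $u_1,\dots,u_K$ are fixed probability distributions (densities) on $[0,1]$ and $\gamma:\mathcal{X}\to\{1,\dots,K\}$ is a fixed map, and such that $S$ and $Y$ are conditionally independent given $X$. Let $(x_1,y_1),\dots,(x_N,y_N)$ be i.i.d. copies of $(X,Y)$. Let $I_1,\dots,I_M$ be intervals partitioning $[0,1]$, and fix $m$ with $P(S\in I_m)>0$. Define $$\hat r_m=\frac{\sum_{n=1}^N P(S\in I_m\mid X=x_n)\,y_n}{\sum_{n=1}^N P(S\in I_m\mid X=x_n)},\qquad \hat g_m=\frac{\sum_{n=1}^N \mathbb{E}[S\,\mathbf{1}[S\in I_m]\mid X=x_n]}{\sum_{n=1}^N P(S\in I_m\mid X=x_n)},\qquad \hat p_m=\frac{1}{N}\sum_{n=1}^N P(S\in I_m\mid X=x_n).$$ Then, as $N\to\infty$, $\hat r_m$, $\hat g_m$ and $\hat p_m$ are consistent estimators (converge in probability) of $\mathbb{E}[Y\mid S\in I_m]$, $\mathbb{E}[S\mid S\in I_m]$ and $P(S\in I_m)$, respectively.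
   Context: The classifier outputs, for each input $x$, a confidence distribution $u_{\gamma(x)}$ over $[0,1]$ (one of $K$ distributions associated with certainty phrases) rather than a single score; $S$ denotes a score drawn from this distribution. The quantities $P(S\in I_m\mid X=x_n)=\int_{I_m} u_{\gamma(x_n)}(s)\,ds$ and $\mathbb{E}[S\,\mathbf{1}[S\in I_m]\mid X=x_n]=\int_{I_m} s\,u_{\gamma(x_n)}(s)\,ds$ are computed from the known distribution $u_{\gamma(x_n)}$. *)

theory Defs
  imports "HOL-Probability.Probability"
begin

text \<open>P(S \<in> A | X = x) when gamma x = k, i.e. the integral of the k-th distribution over A.\<close>
definition bin_prob :: "(nat \<Rightarrow> real \<Rightarrow> real) \<Rightarrow> real set \<Rightarrow> nat \<Rightarrow> real" where
  "bin_prob u A k = (LINT s:A|lborel. u k s)"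

text \<open>E[S 1[S \<in> A] | X = x] when gamma x = k.\<close>
definition bin_mom :: "(nat \<Rightarrow> real \<Rightarrow> real) \<Rightarrow> real set \<Rightarrow> nat \<Rightarrow> real" where
  "bin_mom u A k = (LINT s:A|lborel. s * u k s)"

definition r_hat :: "(nat \<Rightarrow> real \<Rightarrow> real) \<Rightarrow> ('x \<Rightarrow> nat) \<Rightarrow> real set
    \<Rightarrow> (nat \<Rightarrow> 'a \<Rightarrow> 'x) \<Rightarrow> (nat \<Rightarrow> 'a \<Rightarrow> real) \<Rightarrow> nat \<Rightarrow> 'a \<Rightarrow> real" where
  "r_hat u \<gamma> A Xs Ys N \<omega> =
     (\<Sum>n<N. bin_prob u A (\<gamma> (Xs n \<omega>)) * Ys n \<omega>) / (\<Sum>n<N. bin_prob u A (\<gamma> (Xs n \<omega>)))"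

definition g_hat :: "(nat \<Rightarrow> real \<Rightarrow> real) \<Rightarrow> ('x \<Rightarrow> nat) \<Rightarrow> real set
    \<Rightarrow> (nat \<Rightarrow> 'a \<Rightarrow> 'x) \<Rightarrow> nat \<Rightarrow> 'a \<Rightarrow> real" where
  "g_hat u \<gamma> A Xs N \<omega> =
     (\<Sum>n<N. bin_mom u A (\<gamma> (Xs n \<omega>))) / (\<Sum>n<N. bin_prob u A (\<gamma> (Xs n \<omega>)))"

definition p_hat :: "(nat \<Rightarrow> real \<Rightarrow> real) \<Rightarrow> ('x \<Rightarrow> nat) \<Rightarrow> real set
    \<Rightarrow> (nat \<Rightarrow> 'a \<Rightarrow> 'x) \<Rightarrow> nat \<Rightarrow> 'a \<Rightarrow> real" where
  "p_hat u \<gamma> A Xs N \<omega> = (\<Sum>n<N. bin_prob u A (\<gamma> (Xs n \<omega>))) / real N"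

definition cond_exp_event :: "'a measure \<Rightarrow> ('a \<Rightarrow> real) \<Rightarrow> 'a set \<Rightarrow> real" where
  "cond_exp_event M f B = (\<integral>\<omega>. f \<omega> * indicator B \<omega> \<partial>M) / measure M B"

definition conv_in_prob :: "'a measure \<Rightarrow> (nat \<Rightarrow> 'a \<Rightarrow> real) \<Rightarrow> real \<Rightarrow> bool" where
  "conv_in_prob M Z c \<longleftrightarrow>
     (\<forall>e>0. (\<lambda>N. measure M {\<omega> \<in> space M. e < \<bar>Z N \<omega> - c\<bar>}) \<longlonglongrightarrow> 0)"

end

theory Submission
  imports Defs
begin


lemma (in prob_space) wlln_bounded:
  fixes Z :: "nat \<Rightarrow> 'a \<Rightarrow> real"
  assumes indep: "indep_vars (\<lambda>_. borel) Z UNIV"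
    and bnd: "\<And>n. AE \<omega> in M. \<bar>Z n \<omega>\<bar> \<le> B"
    and mean: "\<And>n. expectation (Z n) = \<mu>"
  shows "conv_in_prob M (\<lambda>N \<omega>. (\<Sum>n<N. Z n \<omega>) / real N) \<mu>"
proof -
  have measZ[measurable]: "Z n \<in> borel_measurable M" for n
    using indep unfolding indep_vars_def by auto
  define W where "W n \<omega> = Z n \<omega> - \<mu>" for n \<omega>
  define C where "C = (B + \<bar>\<mu>\<bar>)\<^sup>2"
  have measW[measurable]: "W n \<in> borel_measurable M" for n
    unfolding W_def by measurable
  have indepW: "indep_vars (\<lambda>_. borel) W UNIV"
    unfolding W_def by (rule indep_vars_compose2[OF indep]) auto
  have bndW: "AE \<omega> in M. \<bar>W n \<omega>\<bar> \<le> B + \<bar>\<mu>\<bar>" for n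
    using bnd[of n] by eventually_elim (auto simp: W_def)
  have intW: "integrable M (W n)" for n
    by (rule integrable_const_bound[where B="B + \<bar>\<mu>\<bar>"]) (use bndW in auto)
  have intZ: "integrable M (Z n)" for n
    by (rule integrable_const_bound[where B="B"]) (use bnd in auto)
  have EW: "expectation (W n) = 0" for n
    unfolding W_def using mean intZ by (simp add: prob_space)
  have bndWW: "AE \<omega> in M. \<bar>W i \<omega> * W j \<omega>\<bar> \<le> C" for i j
    using bndW[of i] bndW[of j] proof eventually_elim
    case (elim \<omega>)
    then have "\<bar>W i \<omega>\<bar> * \<bar>W j \<omega>\<bar> \<le> (B + \<bar>\<mu>\<bar>) * (B + \<bar>\<mu>\<bar>)"
      by (intro mult_mono) auto
    then show ?case by (simp add: C_def power2_eq_square abs_mult)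
  qed
  have intWW: "integrable M (\<lambda>\<omega>. W i \<omega> * W j \<omega>)" for i j
    by (rule integrable_const_bound[where B=C]) (use bndWW in auto)
  have cross: "expectation (\<lambda>\<omega>. W i \<omega> * W j \<omega>) = 0" if "i \<noteq> j" for i j
  proof -
    have "indep_vars (\<lambda>_. borel) W {i, j}"
      by (rule indep_vars_subset[OF indepW]) auto
    then have "(\<integral>\<omega>. (\<Prod>k\<in>{i,j}. W k \<omega>) \<partial>M) = (\<Prod>k\<in>{i,j}. expectation (W k))"
      by (intro indep_vars_lebesgue_integral) (auto intro: intW)
    then show ?thesis using that EW by simp
  qed
  have diag: "expectation (\<lambda>\<omega>. W i \<omega> * W i \<omega>) \<le> C" for i
  proof -
    have "expectation (\<lambda>\<omega>. W i \<omega> * W i \<omega>) \<le> expectation (\<lambda>\<omega>. C)"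
      using bndWW[of i i] by (intro integral_mono_AE intWW) auto
    then show ?thesis by (simp add: prob_space)
  qed
  have key: "expectation (\<lambda>\<omega>. (\<Sum>n<N. W n \<omega>)\<^sup>2) \<le> real N * C" for N
  proof -
    have "expectation (\<lambda>\<omega>. (\<Sum>n<N. W n \<omega>)\<^sup>2)
        = expectation (\<lambda>\<omega>. \<Sum>i<N. \<Sum>j<N. W i \<omega> * W j \<omega>)"
      by (simp add: power2_eq_square sum_product)
    also have "\<dots> = (\<Sum>i<N. \<Sum>j<N. expectation (\<lambda>\<omega>. W i \<omega> * W j \<omega>))"
      by (simp add: Bochner_Integration.integral_sum intWW)
    also have "\<dots> = (\<Sum>i<N. expectation (\<lambda>\<omega>. W i \<omega> * W i \<omega>))"
    proof (rule sum.cong[OF refl])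
      fix i assume "i \<in> {..<N}"
      then have "(\<Sum>j<N. expectation (\<lambda>\<omega>. W i \<omega> * W j \<omega>))
          = (\<Sum>j\<in>{i}. expectation (\<lambda>\<omega>. W i \<omega> * W j \<omega>))"
        by (intro sum.mono_neutral_right) (auto intro: cross)
      then show "(\<Sum>j<N. expectation (\<lambda>\<omega>. W i \<omega> * W j \<omega>)) = expectation (\<lambda>\<omega>. W i \<omega> * W i \<omega>)"
        by simp
    qed
    also have "\<dots> \<le> (\<Sum>i<N. C)" by (intro sum_mono diag)
    finally show ?thesis by simp
  qed
  show ?thesis
    unfolding conv_in_prob_def
  proof (intro allI impI)
    fix e :: real assume e: "e > 0"
    have ev: "eventually (\<lambda>N. measure M {\<omega> \<in> space M. e < \<bar>(\<Sum>n<N. Z n \<omega>) / real N - \<mu>\<bar>}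
              \<le> (C / e\<^sup>2) / real N) sequentially"
      using eventually_gt_at_top[of 0]
    proof eventually_elim
      case (elim N)
      then have Npos: "real N > 0" by simp
      have sub: "{\<omega> \<in> space M. e < \<bar>(\<Sum>n<N. Z n \<omega>) / real N - \<mu>\<bar>}
          \<subseteq> {\<omega> \<in> space M. (real N * e)\<^sup>2 \<le> (\<Sum>n<N. W n \<omega>)\<^sup>2}"
      proof safe
        fix \<omega> assume "\<omega> \<in> space M" "e < \<bar>(\<Sum>n<N. Z n \<omega>) / real N - \<mu>\<bar>"
        moreover have "(\<Sum>n<N. Z n \<omega>) / real N - \<mu> = (\<Sum>n<N. W n \<omega>) / real N"
          using Npos by (simp add: W_def sum_subtractf field_simps)
        ultimately have "e < \<bar>\<Sum>n<N. W n \<omega>\<bar> / real N" by (simp add: abs_div_pos Npos)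
        then have "real N * e < \<bar>\<Sum>n<N. W n \<omega>\<bar>" using Npos by (simp add: field_simps)
        then have "(real N * e)\<^sup>2 \<le> \<bar>\<Sum>n<N. W n \<omega>\<bar>\<^sup>2"
          using Npos e by (intro power_mono) auto
        then show "(real N * e)\<^sup>2 \<le> (\<Sum>n<N. W n \<omega>)\<^sup>2" by simp
      qed
      have intS: "integrable M (\<lambda>\<omega>. (\<Sum>n<N. W n \<omega>)\<^sup>2)"
        by (simp add: power2_eq_square sum_product intWW)
      have "measure M {\<omega> \<in> space M. e < \<bar>(\<Sum>n<N. Z n \<omega>) / real N - \<mu>\<bar>}
          \<le> measure M {\<omega> \<in> space M. (real N * e)\<^sup>2 \<le> (\<Sum>n<N. W n \<omega>)\<^sup>2}"
        by (intro finite_measure_mono sub) measurable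
      also have "\<dots> \<le> expectation (\<lambda>\<omega>. (\<Sum>n<N. W n \<omega>)\<^sup>2) / (real N * e)\<^sup>2"
        by (rule integral_Markov_inequality_measure[OF intS, where A="space M"]) (use Npos e in auto)
      also have "\<dots> \<le> (real N * C) / (real N * e)\<^sup>2"
        by (intro divide_right_mono key) auto
      also have "\<dots> = (C / e\<^sup>2) / real N"
        using Npos e by (simp add: field_simps power2_eq_square)
      finally show ?case .
    qed
    show "(\<lambda>N. measure M {\<omega> \<in> space M. e < \<bar>(\<Sum>n<N. Z n \<omega>) / real N - \<mu>\<bar>}) \<longlonglongrightarrow> 0"
      by (rule tendsto_sandwich[OF _ ev tendsto_const lim_const_over_n]) auto
  qed
qed



lemma div_close:
  fixes a b A B e d :: real
  assumes b: "b \<noteq> 0" and e: "e > 0"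
    and d: "d \<le> \<bar>b\<bar>/2" "d * (2 * (\<bar>a\<bar> + \<bar>b\<bar>)) \<le> e * b\<^sup>2"
    and hA: "\<bar>A - a\<bar> \<le> d" and hB: "\<bar>B - b\<bar> \<le> d"
  shows "\<bar>A / B - a / b\<bar> \<le> e"
proof -
  have Bb: "\<bar>B\<bar> \<ge> \<bar>b\<bar>/2" using hB d by linarith
  have Bnz: "B \<noteq> 0" using Bb b by auto
  have eq: "A / B - a / b = ((A - a) * b - a * (B - b)) / (B * b)"
    using Bnz b by (simp add: field_simps)
  have "\<bar>(A - a) * b - a * (B - b)\<bar> \<le> \<bar>A - a\<bar> * \<bar>b\<bar> + \<bar>a\<bar> * \<bar>B - b\<bar>"
    by (metis abs_mult abs_triangle_ineq4)
  also have "\<dots> \<le> d * \<bar>b\<bar> + \<bar>a\<bar> * d"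
    by (intro add_mono mult_right_mono mult_left_mono hA hB) auto
  also have "\<dots> \<le> e * b\<^sup>2 / 2" using d(2) by (simp add: field_simps)
  finally have num: "\<bar>(A - a) * b - a * (B - b)\<bar> \<le> e * b\<^sup>2 / 2" .
  have den: "\<bar>B * b\<bar> \<ge> b\<^sup>2 / 2"
  proof -
    have "\<bar>B\<bar> * \<bar>b\<bar> \<ge> (\<bar>b\<bar>/2) * \<bar>b\<bar>" by (intro mult_right_mono Bb) auto
    then show ?thesis by (simp add: abs_mult power2_eq_square)
  qed
  have "\<bar>A / B - a / b\<bar> = \<bar>(A - a) * b - a * (B - b)\<bar> / \<bar>B * b\<bar>"
    by (simp add: eq abs_divide)
  also have "\<dots> \<le> (e * b\<^sup>2 / 2) / (b\<^sup>2 / 2)"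
    using b e by (intro frac_le num den) auto
  also have "\<dots> = e" using b by (simp add: field_simps)
  finally show ?thesis .
qed

lemma conv_in_prob_divide:
  assumes M: "prob_space M"
    and hA: "conv_in_prob M A a" and hB: "conv_in_prob M B b" and b: "b \<noteq> 0"
    and mA[measurable]: "\<And>N. A N \<in> borel_measurable M"
    and mB[measurable]: "\<And>N. B N \<in> borel_measurable M"
  shows "conv_in_prob M (\<lambda>N \<omega>. A N \<omega> / B N \<omega>) (a / b)"
  unfolding conv_in_prob_def
proof (intro allI impI)
  interpret prob_space M by fact
  fix e :: real assume e: "e > 0"
  define d where "d = min (\<bar>b\<bar>/2) (e * b\<^sup>2 / (2 * (\<bar>a\<bar> + \<bar>b\<bar>)))"
  have abp: "\<bar>a\<bar> + \<bar>b\<bar> > 0" using b by (simp add: add_nonneg_pos)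
  have dpos: "d > 0" using b e abp unfolding d_def by auto
  have d1: "d \<le> \<bar>b\<bar>/2" unfolding d_def by (rule min.cobounded1)
  have d2: "d * (2 * (\<bar>a\<bar> + \<bar>b\<bar>)) \<le> e * b\<^sup>2"
  proof -
    have "d \<le> e * b\<^sup>2 / (2 * (\<bar>a\<bar> + \<bar>b\<bar>))" unfolding d_def by simp
    then show ?thesis using abp by (simp add: field_simps)
  qed
  have le: "measure M {\<omega> \<in> space M. e < \<bar>A N \<omega> / B N \<omega> - a / b\<bar>}
      \<le> measure M {\<omega> \<in> space M. d < \<bar>A N \<omega> - a\<bar>} + measure M {\<omega> \<in> space M. d < \<bar>B N \<omega> - b\<bar>}" for N
  proof -
    have "measure M {\<omega> \<in> space M. e < \<bar>A N \<omega> / B N \<omega> - a / b\<bar>}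
        \<le> measure M ({\<omega> \<in> space M. d < \<bar>A N \<omega> - a\<bar>} \<union> {\<omega> \<in> space M. d < \<bar>B N \<omega> - b\<bar>})"
    proof (intro finite_measure_mono)
      show "{\<omega> \<in> space M. e < \<bar>A N \<omega> / B N \<omega> - a / b\<bar>}
          \<subseteq> {\<omega> \<in> space M. d < \<bar>A N \<omega> - a\<bar>} \<union> {\<omega> \<in> space M. d < \<bar>B N \<omega> - b\<bar>}"
      proof safe
        fix \<omega> assume "\<omega> \<in> space M" "e < \<bar>A N \<omega> / B N \<omega> - a / b\<bar>"
          "\<not> d < \<bar>B N \<omega> - b\<bar>"
        then show "d < \<bar>A N \<omega> - a\<bar>"
          using div_close[OF b e d1 d2, of "A N \<omega>" "B N \<omega>"] by linarith
      qed
    qed measurable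
    also have "\<dots> \<le> measure M {\<omega> \<in> space M. d < \<bar>A N \<omega> - a\<bar>} + measure M {\<omega> \<in> space M. d < \<bar>B N \<omega> - b\<bar>}"
      by (intro measure_Un_le) measurable
    finally show ?thesis .
  qed
  have lim: "(\<lambda>N. measure M {\<omega> \<in> space M. d < \<bar>A N \<omega> - a\<bar>} + measure M {\<omega> \<in> space M. d < \<bar>B N \<omega> - b\<bar>}) \<longlonglongrightarrow> 0 + 0"
    using hA hB dpos unfolding conv_in_prob_def by (intro tendsto_add) auto
  show "(\<lambda>N. measure M {\<omega> \<in> space M. e < \<bar>A N \<omega> / B N \<omega> - a / b\<bar>}) \<longlonglongrightarrow> 0"
    by (rule tendsto_sandwich[OF _ _ tendsto_const lim[simplified]]) (auto intro!: always_eventually le)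
qed



lemma mom_identity:
  fixes M :: "'a measure" and Mx :: "'x measure"
    and X :: "'a \<Rightarrow> 'x" and S :: "'a \<Rightarrow> real"
    and K :: nat and u :: "nat \<Rightarrow> real \<Rightarrow> real" and \<gamma> :: "'x \<Rightarrow> nat" and J :: "real set"
  assumes "prob_space M"
    and X_meas[measurable]: "X \<in> measurable M Mx"
    and S_meas[measurable]: "S \<in> borel_measurable M"
    and gamma_range: "\<forall>x\<in>space Mx. \<gamma> x \<in> {1..K}"
    and gamma_meas[measurable]: "\<gamma> \<in> measurable Mx (count_space UNIV)"
    and u_meas: "\<forall>k\<in>{1..K}. u k \<in> borel_measurable lborel"
    and u_nonneg: "\<forall>k\<in>{1..K}. \<forall>s. 0 \<le> u k s"
    and u_supp: "\<forall>k\<in>{1..K}. \<forall>s. s \<notin> {0..1} \<longrightarrow> u k s = 0"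
    and u_int: "\<forall>k\<in>{1..K}. set_integrable lborel {0..1::real} (u k)"
    and jl: "\<And>A C. A \<in> sets Mx \<Longrightarrow> C \<in> sets (borel :: real measure) \<Longrightarrow>
        measure M {\<omega> \<in> space M. X \<omega> \<in> A \<and> S \<omega> \<in> C}
        = (\<integral>\<omega>. indicator A (X \<omega>) * (LINT s:C|lborel. u (\<gamma> (X \<omega>)) s) \<partial>M)"
    and J[measurable]: "J \<in> sets borel"
  shows "(\<integral>\<omega>. S \<omega> * indicator {\<omega> \<in> space M. S \<omega> \<in> J} \<omega> \<partial>M)
       = (\<integral>\<omega>. bin_mom u J (\<gamma> (X \<omega>)) \<partial>M)"
proof -
  interpret prob_space M by fact
  have gX[measurable]: "(\<lambda>\<omega>. \<gamma> (X \<omega>)) \<in> measurable M (count_space UNIV)"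
    by measurable
  have hX[measurable]: "(\<lambda>\<omega>. h (\<gamma> (X \<omega>))) \<in> borel_measurable M" for h :: "nat \<Rightarrow> real"
    by (rule measurable_compose[OF gX]) simp
  have rng: "\<gamma> (X \<omega>) \<in> {1..K}" if "\<omega> \<in> space M" for \<omega>
    using gamma_range measurable_space[OF X_meas that] by blast
  have uint: "integrable lborel (u k)" if "k \<in> {1..K}" for k
  proof -
    have "integrable lborel (\<lambda>s. indicator {0..1} s *\<^sub>R u k s)"
      using u_int that unfolding set_integrable_def by blast
    moreover have "(\<lambda>s. indicator {0..1::real} s *\<^sub>R u k s) = u k"
      using u_supp that by (auto simp: indicator_def fun_eq_iff)
    ultimately show ?thesis by simp
  qed
  have umeas[measurable]: "u k \<in> borel_measurable borel" if "k \<in> {1..K}" for k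
    using u_meas that by simp
  have AE01: "AE \<omega> in M. S \<omega> \<in> {0..1}"
  proof -
    have "measure M {\<omega> \<in> space M. X \<omega> \<in> space Mx \<and> S \<omega> \<in> - {0..1}}
        = (\<integral>\<omega>. indicator (space Mx) (X \<omega>) * (LINT s:(- {0..1})|lborel. u (\<gamma> (X \<omega>)) s) \<partial>M)"
      by (rule jl) auto
    also have "\<dots> = (\<integral>\<omega>. 0 \<partial>M)"
    proof (rule Bochner_Integration.integral_cong[OF refl])
      fix \<omega> assume \<omega>: "\<omega> \<in> space M"
      have "(\<lambda>s. indicator (- {0..1::real}) s *\<^sub>R u (\<gamma> (X \<omega>)) s) = (\<lambda>s. 0)"
        using u_supp rng[OF \<omega>] by (auto simp: indicator_def fun_eq_iff)
      then show "indicator (space Mx) (X \<omega>) * (LINT s:(- {0..1})|lborel. u (\<gamma> (X \<omega>)) s) = 0"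
        unfolding set_lebesgue_integral_def by simp
    qed
    finally have "measure M {\<omega> \<in> space M. X \<omega> \<in> space Mx \<and> S \<omega> \<in> - {0..1}} = 0" by simp
    moreover have "{\<omega> \<in> space M. X \<omega> \<in> space Mx \<and> S \<omega> \<in> - {0..1}} = {\<omega> \<in> space M. \<not> S \<omega> \<in> {0..1}}"
      using measurable_space[OF X_meas] by auto
    ultimately have "emeasure M {\<omega> \<in> space M. \<not> S \<omega> \<in> {0..1}} = 0"
      by (simp add: emeasure_eq_measure)
    then show ?thesis
      by (subst AE_iff_measurable[OF _ refl]) auto
  qed
  define F where "F k = {\<omega> \<in> space M. \<gamma> (X \<omega>) = k}" for k
  have F_sets[measurable]: "F k \<in> sets M" for k unfolding F_def by measurable
  have step1: "measure M {\<omega> \<in> space M. \<gamma> (X \<omega>) = k \<and> S \<omega> \<in> C} = prob (F k) * (LINT s:C|lborel. u k s)"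
    if C[measurable]: "C \<in> sets borel" for k C
  proof -
    have A: "{x \<in> space Mx. \<gamma> x = k} \<in> sets Mx" by measurable
    have "measure M {\<omega> \<in> space M. X \<omega> \<in> {x \<in> space Mx. \<gamma> x = k} \<and> S \<omega> \<in> C}
        = (\<integral>\<omega>. indicator {x \<in> space Mx. \<gamma> x = k} (X \<omega>) * (LINT s:C|lborel. u (\<gamma> (X \<omega>)) s) \<partial>M)"
      by (rule jl[OF A C])
    also have "\<dots> = (\<integral>\<omega>. indicator (F k) \<omega> * (LINT s:C|lborel. u k s) \<partial>M)"
      using measurable_space[OF X_meas]
      by (intro Bochner_Integration.integral_cong) (auto simp: F_def indicator_def)
    also have "\<dots> = prob (F k) * (LINT s:C|lborel. u k s)"
      by simp
    moreover have "{\<omega> \<in> space M. X \<omega> \<in> {x \<in> space Mx. \<gamma> x = k} \<and> S \<omega> \<in> C}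
        = {\<omega> \<in> space M. \<gamma> (X \<omega>) = k \<and> S \<omega> \<in> C}"
      using measurable_space[OF X_meas] by auto
    ultimately show ?thesis by simp
  qed
  have step3: "(\<integral>\<omega>. indicator (F k) \<omega> * (S \<omega> * indicator J (S \<omega>)) \<partial>M) = prob (F k) * bin_mom u J k"
    if k: "k \<in> {1..K}" for k
  proof -
    note [measurable] = umeas[OF k]
    define \<nu>1 where "\<nu>1 = distr (density M (\<lambda>\<omega>. ennreal (indicator (F k) \<omega>))) borel S"
    define \<nu>2 where "\<nu>2 = density lborel (\<lambda>s. ennreal (prob (F k) * u k s))"
    have eq: "\<nu>1 = \<nu>2"
    proof (rule measure_eqI)
      show "sets \<nu>1 = sets \<nu>2" by (simp add: \<nu>1_def \<nu>2_def)
    next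
      fix C assume "C \<in> sets \<nu>1"
      then have C[measurable]: "C \<in> sets borel" by (simp add: \<nu>1_def)
      have "emeasure \<nu>1 C = emeasure (density M (indicator (F k))) (S -` C \<inter> space M)"
        unfolding \<nu>1_def by (subst emeasure_distr) (auto simp: ennreal_indicator)
      also have "\<dots> = emeasure M (F k \<inter> (S -` C \<inter> space M))"
        by (rule emeasure_restricted) auto
      also have "F k \<inter> (S -` C \<inter> space M) = {\<omega> \<in> space M. \<gamma> (X \<omega>) = k \<and> S \<omega> \<in> C}"
        by (auto simp: F_def)
      also have "emeasure M {\<omega> \<in> space M. \<gamma> (X \<omega>) = k \<and> S \<omega> \<in> C}
          = ennreal (prob (F k) * (LINT s:C|lborel. u k s))"
        by (simp add: emeasure_eq_measure step1[OF C])
      also have "\<dots> = emeasure \<nu>2 C"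
      proof -
        have int: "integrable lborel (\<lambda>s. prob (F k) * u k s * indicator C s)"
          using uint[OF k] by (intro integrable_real_mult_indicator) auto
        have "emeasure \<nu>2 C = (\<integral>\<^sup>+ s. ennreal (prob (F k) * u k s * indicator C s) \<partial>lborel)"
          unfolding \<nu>2_def by (subst emeasure_density) (auto intro!: nn_integral_cong simp: indicator_def)
        also have "\<dots> = ennreal (\<integral>s. prob (F k) * u k s * indicator C s \<partial>lborel)"
          using u_nonneg k by (intro nn_integral_eq_integral int) auto
        also have "(\<integral>s. prob (F k) * u k s * indicator C s \<partial>lborel) = prob (F k) * (LINT s:C|lborel. u k s)"
        proof -
          have "(\<lambda>s. prob (F k) * u k s * indicator C s) = (\<lambda>s. prob (F k) * (indicator C s *\<^sub>R u k s))"
            by (simp add: fun_eq_iff mult.commute mult.left_commute)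
          then show ?thesis unfolding set_lebesgue_integral_def by simp
        qed
        finally show ?thesis by simp
      qed
      finally show "emeasure \<nu>1 C = emeasure \<nu>2 C" .
    qed
    have "(\<integral>s. s * indicator J s \<partial>\<nu>1) = (\<integral>\<omega>. indicator (F k) \<omega> * (S \<omega> * indicator J (S \<omega>)) \<partial>M)"
      unfolding \<nu>1_def by (subst integral_distr) (auto simp: integral_density)
    moreover have "(\<integral>s. s * indicator J s \<partial>\<nu>2) = prob (F k) * bin_mom u J k"
      unfolding \<nu>2_def bin_mom_def set_lebesgue_integral_def using u_nonneg k
    proof (subst integral_density)
      have "(\<lambda>s. (prob (F k) * u k s) *\<^sub>R (s * indicator J s)) = (\<lambda>s. prob (F k) * (indicator J s *\<^sub>R (s * u k s)))"
        by (simp add: fun_eq_iff mult.commute mult.left_commute)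
      then show "(LBINT s. (prob (F k) * u k s) *\<^sub>R (s * indicator J s)) = prob (F k) * (LBINT s. indicator J s *\<^sub>R (s * u k s))"
        by simp
    qed (use u_nonneg k in auto)
    ultimately show ?thesis using eq by simp
  qed
  have sumF: "(\<Sum>k\<in>{1..K}. indicator (F k) \<omega> * c k) = c (\<gamma> (X \<omega>))" if \<omega>: "\<omega> \<in> space M"
    for \<omega> and c :: "nat \<Rightarrow> real"
  proof -
    have "(\<Sum>k\<in>{1..K}. indicator (F k) \<omega> * c k) = (\<Sum>k\<in>{1..K}. if \<gamma> (X \<omega>) = k then c k else 0)"
      using \<omega> by (intro sum.cong) (auto simp: F_def indicator_def)
    also have "\<dots> = c (\<gamma> (X \<omega>))" using rng[OF \<omega>] by (simp add: sum.delta)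
    finally show ?thesis .
  qed
  have int3: "integrable M (\<lambda>\<omega>. indicator (F k) \<omega> * (S \<omega> * indicator J (S \<omega>)))" for k
  proof (rule integrable_const_bound[where B=1])
    show "AE \<omega> in M. norm (indicator (F k) \<omega> * (S \<omega> * indicator J (S \<omega>))) \<le> (1::real)"
      using AE01 by eventually_elim (auto simp: indicator_def abs_mult)
  qed measurable
  have "(\<integral>\<omega>. S \<omega> * indicator {\<omega> \<in> space M. S \<omega> \<in> J} \<omega> \<partial>M)
      = (\<integral>\<omega>. (\<Sum>k\<in>{1..K}. indicator (F k) \<omega> * (S \<omega> * indicator J (S \<omega>))) \<partial>M)"
  proof (rule Bochner_Integration.integral_cong[OF refl])
    fix \<omega> assume \<omega>: "\<omega> \<in> space M"
    have eq: "(\<Sum>k\<in>{1..K}. indicator (F k) \<omega> * (S \<omega> * indicator J (S \<omega>))) = S \<omega> * indicator J (S \<omega>)"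
      using sumF[OF \<omega>, of "\<lambda>_. S \<omega> * indicator J (S \<omega>)"] by simp
    have "S \<omega> * indicator {\<omega> \<in> space M. S \<omega> \<in> J} \<omega> = S \<omega> * indicator J (S \<omega>)"
      using \<omega> by (simp add: indicator_def)
    with eq show "S \<omega> * indicator {\<omega> \<in> space M. S \<omega> \<in> J} \<omega>
        = (\<Sum>k\<in>{1..K}. indicator (F k) \<omega> * (S \<omega> * indicator J (S \<omega>)))"
      by linarith
  qed
  also have "\<dots> = (\<Sum>k\<in>{1..K}. prob (F k) * bin_mom u J k)"
    by (subst Bochner_Integration.integral_sum[OF int3]) (rule sum.cong[OF refl], rule step3, simp)
  also have "\<dots> = (\<integral>\<omega>. (\<Sum>k\<in>{1..K}. indicator (F k) \<omega> * bin_mom u J k) \<partial>M)"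
    by (subst Bochner_Integration.integral_sum) (auto simp del: sum_mult_indicator simp: less_top[symmetric] intro!: integrable_real_indicator)
  also have "\<dots> = (\<integral>\<omega>. bin_mom u J (\<gamma> (X \<omega>)) \<partial>M)"
    by (rule Bochner_Integration.integral_cong[OF refl]) (rule sumF)
  finally show ?thesis .
qed

theorem proposition1:
  fixes M :: "'a measure" and Mx :: "'x measure"
    and X :: "'a \<Rightarrow> 'x" and Y :: "'a \<Rightarrow> real" and S :: "'a \<Rightarrow> real"
    and K :: nat and u :: "nat \<Rightarrow> real \<Rightarrow> real" and \<gamma> :: "'x \<Rightarrow> nat"
    and Xs :: "nat \<Rightarrow> 'a \<Rightarrow> 'x" and Ys :: "nat \<Rightarrow> 'a \<Rightarrow> real"
    and Mb :: nat and I :: "nat \<Rightarrow> real set" and m :: nat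
  assumes "prob_space M"
    and X_meas: "X \<in> measurable M Mx"
    and Y_meas: "Y \<in> borel_measurable M"
    and S_meas: "S \<in> borel_measurable M"
    and Y_01: "\<forall>\<omega>\<in>space M. Y \<omega> \<in> {0, 1}"
    and gamma_range: "\<forall>x\<in>space Mx. \<gamma> x \<in> {1..K}"
    and gamma_meas: "\<gamma> \<in> measurable Mx (count_space UNIV)"
    and u_meas: "\<forall>k\<in>{1..K}. u k \<in> borel_measurable lborel"
    and u_nonneg: "\<forall>k\<in>{1..K}. \<forall>s. 0 \<le> u k s"
    and u_supp: "\<forall>k\<in>{1..K}. \<forall>s. s \<notin> {0..1} \<longrightarrow> u k s = 0"
    and u_int: "\<forall>k\<in>{1..K}. set_integrable lborel {0..1::real} (u k)"
    and u_norm: "\<forall>k\<in>{1..K}. (LINT s:{0..1}|lborel. u k s) = 1"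
    and joint_law: "\<forall>A\<in>sets Mx. \<forall>B\<in>sets (borel :: real measure). \<forall>C\<in>sets (borel :: real measure).
        measure M {\<omega> \<in> space M. X \<omega> \<in> A \<and> Y \<omega> \<in> B \<and> S \<omega> \<in> C}
        = (\<integral>\<omega>. indicator A (X \<omega>) * indicator B (Y \<omega>) * (LINT s:C|lborel. u (\<gamma> (X \<omega>)) s) \<partial>M)"
    and iid_indep: "prob_space.indep_vars M (\<lambda>_. Mx \<Otimes>\<^sub>M (borel :: real measure))
        (\<lambda>n \<omega>. (Xs n \<omega>, Ys n \<omega>)) UNIV"
    and iid_dist: "\<forall>n. distr M (Mx \<Otimes>\<^sub>M borel) (\<lambda>\<omega>. (Xs n \<omega>, Ys n \<omega>))
        = distr M (Mx \<Otimes>\<^sub>M borel) (\<lambda>\<omega>. (X \<omega>, Y \<omega>))"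
    and bins_interval: "\<forall>i\<in>{1..Mb}. is_interval (I i)"
    and bins_disj: "disjoint_family_on I {1..Mb}"
    and bins_cover: "(\<Union>i\<in>{1..Mb}. I i) = {0..1}"
    and m_range: "m \<in> {1..Mb}"
    and m_pos: "measure M {\<omega> \<in> space M. S \<omega> \<in> I m} > 0"
  shows "conv_in_prob M (r_hat u \<gamma> (I m) Xs Ys)
           (cond_exp_event M Y {\<omega> \<in> space M. S \<omega> \<in> I m})
       \<and> conv_in_prob M (g_hat u \<gamma> (I m) Xs)
           (cond_exp_event M S {\<omega> \<in> space M. S \<omega> \<in> I m})
       \<and> conv_in_prob M (p_hat u \<gamma> (I m) Xs)
           (measure M {\<omega> \<in> space M. S \<omega> \<in> I m})"
  proof -
  interpret P: prob_space M by fact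
  note [measurable] = X_meas Y_meas S_meas gamma_meas
  have cnt[measurable]: "h \<in> measurable (count_space UNIV) (borel :: real measure)" for h :: "nat \<Rightarrow> real"
    by simp
  have pairm[measurable]: "(\<lambda>\<omega>. (Xs n \<omega>, Ys n \<omega>)) \<in> measurable M (Mx \<Otimes>\<^sub>M borel)" for n
    using iid_indep unfolding P.indep_vars_def by auto
  have Xm[measurable]: "Xs n \<in> measurable M Mx" for n
    using measurable_compose[OF pairm[of n] measurable_fst] by (simp add: comp_def)
  have Ym[measurable]: "Ys n \<in> borel_measurable M" for n
    using measurable_compose[OF pairm[of n] measurable_snd] by (simp add: comp_def)
  have XYm[measurable]: "(\<lambda>\<omega>. (X \<omega>, Y \<omega>)) \<in> measurable M (Mx \<Otimes>\<^sub>M borel)" by measurable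
  have gfst[measurable]: "(\<lambda>p. h (\<gamma> (fst p))) \<in> borel_measurable (Mx \<Otimes>\<^sub>M borel)" for h :: "nat \<Rightarrow> real"
    by measurable
  have rngX: "\<gamma> (X \<omega>) \<in> {1..K}" if "\<omega> \<in> space M" for \<omega>
    using gamma_range measurable_space[OF X_meas that] by blast
  have gen: "conv_in_prob M (\<lambda>N \<omega>. (\<Sum>n<N. f (Xs n \<omega>, Ys n \<omega>)) / real N) (\<integral>\<omega>. f (X \<omega>, Y \<omega>) \<partial>M)"
    if fm[measurable]: "f \<in> borel_measurable (Mx \<Otimes>\<^sub>M borel)" and fb: "\<forall>\<omega>\<in>space M. \<bar>f (X \<omega>, Y \<omega>)\<bar> \<le> B"
    for f :: "'x \<times> real \<Rightarrow> real" and B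
  proof (rule P.wlln_bounded)
    show "P.indep_vars (\<lambda>_. borel) (\<lambda>n \<omega>. f (Xs n \<omega>, Ys n \<omega>)) UNIV"
      by (rule P.indep_vars_compose2[OF iid_indep]) auto
  next
    fix n
    have "(\<integral>\<omega>. f (Xs n \<omega>, Ys n \<omega>) \<partial>M) = (\<integral>p. f p \<partial>distr M (Mx \<Otimes>\<^sub>M borel) (\<lambda>\<omega>. (Xs n \<omega>, Ys n \<omega>)))"
      by (subst integral_distr) auto
    also have "\<dots> = (\<integral>p. f p \<partial>distr M (Mx \<Otimes>\<^sub>M borel) (\<lambda>\<omega>. (X \<omega>, Y \<omega>)))"
      using iid_dist by simp
    also have "\<dots> = (\<integral>\<omega>. f (X \<omega>, Y \<omega>) \<partial>M)"
      by (subst integral_distr) auto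
    finally show "(\<integral>\<omega>. f (Xs n \<omega>, Ys n \<omega>) \<partial>M) = (\<integral>\<omega>. f (X \<omega>, Y \<omega>) \<partial>M)" .
    have "AE \<omega> in M. \<bar>f (X \<omega>, Y \<omega>)\<bar> \<le> B" using fb by auto
    then have "AE p in distr M (Mx \<Otimes>\<^sub>M borel) (\<lambda>\<omega>. (X \<omega>, Y \<omega>)). \<bar>f p\<bar> \<le> B"
      by (subst AE_distr_iff) auto
    then have "AE p in distr M (Mx \<Otimes>\<^sub>M borel) (\<lambda>\<omega>. (Xs n \<omega>, Ys n \<omega>)). \<bar>f p\<bar> \<le> B"
      by (simp only: iid_dist[rule_format, of n])
    then show "AE \<omega> in M. \<bar>f (Xs n \<omega>, Ys n \<omega>)\<bar> \<le> B"
      by (subst (asm) AE_distr_iff) auto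
  qed
  define hp where "hp = bin_prob u (I m)"
  define hm where "hm = bin_mom u (I m)"
  define E where "E = {\<omega> \<in> space M. S \<omega> \<in> I m}"
  have Im[measurable]: "I m \<in> sets borel"
    using bins_interval m_range by (intro real_interval_borel_measurable) auto
  have E_sets[measurable]: "E \<in> sets M" unfolding E_def by measurable
  define Bp where "Bp = (\<Sum>k\<in>{1..K}. \<bar>hp k\<bar>)"
  define Bm where "Bm = (\<Sum>k\<in>{1..K}. \<bar>hm k\<bar>)"
  have bp: "\<bar>hp (\<gamma> (X \<omega>))\<bar> \<le> Bp" if "\<omega> \<in> space M" for \<omega>
    unfolding Bp_def by (rule member_le_sum[OF rngX[OF that]]) auto
  have bm: "\<bar>hm (\<gamma> (X \<omega>))\<bar> \<le> Bm" if "\<omega> \<in> space M" for \<omega>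
    unfolding Bm_def by (rule member_le_sum[OF rngX[OF that]]) auto
  have c1: "conv_in_prob M (\<lambda>N \<omega>. (\<Sum>n<N. hp (\<gamma> (Xs n \<omega>))) / real N) (\<integral>\<omega>. hp (\<gamma> (X \<omega>)) \<partial>M)"
    using gen[of "\<lambda>p. hp (\<gamma> (fst p))" Bp] bp by simp
  have c2: "conv_in_prob M (\<lambda>N \<omega>. (\<Sum>n<N. hp (\<gamma> (Xs n \<omega>)) * Ys n \<omega>) / real N) (\<integral>\<omega>. hp (\<gamma> (X \<omega>)) * Y \<omega> \<partial>M)"
  proof -
    have "\<bar>hp (\<gamma> (X \<omega>)) * Y \<omega>\<bar> \<le> Bp" if "\<omega> \<in> space M" for \<omega>
      using bp[OF that] Y_01 that by (auto simp: abs_mult)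
    then show ?thesis using gen[of "\<lambda>p. hp (\<gamma> (fst p)) * snd p" Bp] by simp
  qed
  have c3: "conv_in_prob M (\<lambda>N \<omega>. (\<Sum>n<N. hm (\<gamma> (Xs n \<omega>))) / real N) (\<integral>\<omega>. hm (\<gamma> (X \<omega>)) \<partial>M)"
    using gen[of "\<lambda>p. hm (\<gamma> (fst p))" Bm] bm by simp
  have F1: "(\<integral>\<omega>. hp (\<gamma> (X \<omega>)) \<partial>M) = measure M E"
  proof -
    have "measure M {\<omega> \<in> space M. X \<omega> \<in> space Mx \<and> Y \<omega> \<in> UNIV \<and> S \<omega> \<in> I m}
        = (\<integral>\<omega>. indicator (space Mx) (X \<omega>) * indicator UNIV (Y \<omega>) * (LINT s:(I m)|lborel. u (\<gamma> (X \<omega>)) s) \<partial>M)"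
      using joint_law[rule_format, of "space Mx" UNIV "I m"] Im by simp
    also have "\<dots> = (\<integral>\<omega>. hp (\<gamma> (X \<omega>)) \<partial>M)"
      using measurable_space[OF X_meas]
      by (intro Bochner_Integration.integral_cong) (auto simp: hp_def bin_prob_def)
    also have "{\<omega> \<in> space M. X \<omega> \<in> space Mx \<and> Y \<omega> \<in> UNIV \<and> S \<omega> \<in> I m} = E"
      using measurable_space[OF X_meas] by (auto simp: E_def)
    finally show ?thesis by simp
  qed
  have F2: "(\<integral>\<omega>. Y \<omega> * indicator E \<omega> \<partial>M) = (\<integral>\<omega>. hp (\<gamma> (X \<omega>)) * Y \<omega> \<partial>M)"
  proof -
    define G where "G = {\<omega> \<in> space M. X \<omega> \<in> space Mx \<and> Y \<omega> \<in> {1} \<and> S \<omega> \<in> I m}"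
    have G_sets[measurable]: "G \<in> sets M" unfolding G_def by measurable
    have "(\<integral>\<omega>. Y \<omega> * indicator E \<omega> \<partial>M) = (\<integral>\<omega>. indicator G \<omega> \<partial>M)"
      using measurable_space[OF X_meas] Y_01
      by (intro Bochner_Integration.integral_cong) (auto simp: E_def G_def indicator_def)
    also have "\<dots> = measure M G" by simp
    also have "\<dots> = (\<integral>\<omega>. indicator (space Mx) (X \<omega>) * indicator {1} (Y \<omega>) * (LINT s:(I m)|lborel. u (\<gamma> (X \<omega>)) s) \<partial>M)"
      unfolding G_def using joint_law[rule_format, of "space Mx" "{1}" "I m"] Im by simp
    also have "\<dots> = (\<integral>\<omega>. hp (\<gamma> (X \<omega>)) * Y \<omega> \<partial>M)"
      using measurable_space[OF X_meas] Y_01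
      by (intro Bochner_Integration.integral_cong) (auto simp: hp_def bin_prob_def indicator_def)
    finally show ?thesis .
  qed
  have F3: "(\<integral>\<omega>. S \<omega> * indicator E \<omega> \<partial>M) = (\<integral>\<omega>. hm (\<gamma> (X \<omega>)) \<partial>M)"
    unfolding E_def hm_def
  proof (rule mom_identity[where Mx=Mx and K=K])
    fix A C assume A: "A \<in> sets Mx" and C: "C \<in> sets (borel :: real measure)"
    have "measure M {\<omega> \<in> space M. X \<omega> \<in> A \<and> Y \<omega> \<in> UNIV \<and> S \<omega> \<in> C}
        = (\<integral>\<omega>. indicator A (X \<omega>) * indicator UNIV (Y \<omega>) * (LINT s:C|lborel. u (\<gamma> (X \<omega>)) s) \<partial>M)"
      using joint_law[rule_format, of A UNIV C] A C by simp
    then show "measure M {\<omega> \<in> space M. X \<omega> \<in> A \<and> S \<omega> \<in> C}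
        = (\<integral>\<omega>. indicator A (X \<omega>) * (LINT s:C|lborel. u (\<gamma> (X \<omega>)) s) \<partial>M)"
      by simp
  qed (use assms in auto)
  have pos: "measure M E \<noteq> 0" using m_pos by (simp add: E_def)
  have am1[measurable]: "(\<lambda>\<omega>. (\<Sum>n<N. hp (\<gamma> (Xs n \<omega>))) / real N) \<in> borel_measurable M" for N
    by measurable
  have am2[measurable]: "(\<lambda>\<omega>. (\<Sum>n<N. hp (\<gamma> (Xs n \<omega>)) * Ys n \<omega>) / real N) \<in> borel_measurable M" for N
    by measurable
  have am3[measurable]: "(\<lambda>\<omega>. (\<Sum>n<N. hm (\<gamma> (Xs n \<omega>))) / real N) \<in> borel_measurable M" for N
    by measurable
  have r_eq: "r_hat u \<gamma> (I m) Xs Ys = (\<lambda>N \<omega>. ((\<Sum>n<N. hp (\<gamma> (Xs n \<omega>)) * Ys n \<omega>) / real N) / ((\<Sum>n<N. hp (\<gamma> (Xs n \<omega>))) / real N))"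
    by (auto simp: fun_eq_iff r_hat_def hp_def)
  have g_eq: "g_hat u \<gamma> (I m) Xs = (\<lambda>N \<omega>. ((\<Sum>n<N. hm (\<gamma> (Xs n \<omega>))) / real N) / ((\<Sum>n<N. hp (\<gamma> (Xs n \<omega>))) / real N))"
    by (auto simp: fun_eq_iff g_hat_def hp_def hm_def)
  have p_eq: "p_hat u \<gamma> (I m) Xs = (\<lambda>N \<omega>. (\<Sum>n<N. hp (\<gamma> (Xs n \<omega>))) / real N)"
    by (auto simp: fun_eq_iff p_hat_def hp_def)
  have "conv_in_prob M (r_hat u \<gamma> (I m) Xs Ys) ((\<integral>\<omega>. hp (\<gamma> (X \<omega>)) * Y \<omega> \<partial>M) / (\<integral>\<omega>. hp (\<gamma> (X \<omega>)) \<partial>M))"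
    unfolding r_eq using pos F1 by (intro conv_in_prob_divide c1 c2 am1 am2) (auto intro: assms(1))
  moreover have "conv_in_prob M (g_hat u \<gamma> (I m) Xs) ((\<integral>\<omega>. hm (\<gamma> (X \<omega>)) \<partial>M) / (\<integral>\<omega>. hp (\<gamma> (X \<omega>)) \<partial>M))"
    unfolding g_eq using pos F1 by (intro conv_in_prob_divide c1 c3 am1 am3) (auto intro: assms(1))
  moreover have "conv_in_prob M (p_hat u \<gamma> (I m) Xs) (measure M E)"
    unfolding p_eq using c1 F1 by simp
  ultimately show ?thesis
    unfolding cond_exp_event_def E_def[symmetric] using F1 F2 F3 by simp
qed

end
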